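(* Let $\Gamma$ be a countable discrete group and $\mu$ a probability measure on $\Gamma$ whose support generates $\Gamma$ as a semigroup. If $\lambda\in\mathbb T$ is a peripheral eigenvalue of $\mathcal P_\mu$, i.e. there is $0\neq T\in\mathcal B(\ell^2(\Gamma))$ with $\mathcal P_\mu(T)=\lambda T$, then $\lambda^k=1$ for some positive integer $k$.
   Context: $\rho$ denotes the right regular representation of $\Gamma$ on $\ell^2(\Gamma)$, $\rho_g\delta_x=\delta_{xg^{-1}}$. The Markov operator $\mathcal P_\mu:\mathcal B(\ell^2(\Gamma))\to\mathcal B(\ell^2(\Gamma))$ is $\mathcal P_\mu(T)=\sum_{g\in\Gamma}\mu(g)\rho_gT\rho_g^*$. *)

theory Defs
  imports "HOL-Analysis.Analysis"
begin

text \<open>The group \<Gamma> is a type of class group_add (a possibly non-abelian group written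
additively) that is countable.  A bounded operator T on l2(\<Gamma>) is represented by its
matrix t x y = <T delta_y, delta_x>; a kernel t is the matrix of a bounded operator iff its
bilinear form is bounded on finitely supported vectors.\<close>

definition bounded_kernel :: "('g \<Rightarrow> 'g \<Rightarrow> complex) \<Rightarrow> bool" where
  "bounded_kernel t \<longleftrightarrow> (\<exists>C. \<forall>F a b. finite F \<longrightarrow>
     cmod (\<Sum>x\<in>F. \<Sum>y\<in>F. cnj (b x) * t x y * a y)
       \<le> C * sqrt (\<Sum>y\<in>F. (cmod (a y))\<^sup>2) * sqrt (\<Sum>x\<in>F. (cmod (b x))\<^sup>2))"

text \<open>Right regular representation rho_g delta_x = delta_(x g^-1) (here x - g).
The matrix of rho_g T rho_g^* is (x,y) |-> t (x+g) (y+g).\<close>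

definition rho_conj :: "'g::group_add \<Rightarrow> ('g \<Rightarrow> 'g \<Rightarrow> complex) \<Rightarrow> ('g \<Rightarrow> 'g \<Rightarrow> complex)" where
  "rho_conj g t = (\<lambda>x y. t (x + g) (y + g))"

definition markov_op :: "('g::group_add \<Rightarrow> real) \<Rightarrow> ('g \<Rightarrow> 'g \<Rightarrow> complex) \<Rightarrow> ('g \<Rightarrow> 'g \<Rightarrow> complex)" where
  "markov_op \<mu> t = (\<lambda>x y. \<Sum>\<^sub>\<infinity>g. complex_of_real (\<mu> g) * rho_conj g t x y)"

definition is_prob :: "('g \<Rightarrow> real) \<Rightarrow> bool" where
  "is_prob \<mu> \<longleftrightarrow> (\<forall>g. \<mu> g \<ge> 0) \<and> (\<mu> has_sum 1) UNIV"

inductive_set sgrp_gen :: "'g::plus set \<Rightarrow> 'g set" for S where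
  base: "s \<in> S \<Longrightarrow> s \<in> sgrp_gen S"
| add: "a \<in> sgrp_gen S \<Longrightarrow> b \<in> sgrp_gen S \<Longrightarrow> a + b \<in> sgrp_gen S"

end

theory Submission
  imports Defs
begin

lemma cmod_diff_sq: "(cmod (a - b))^2 = (cmod a)^2 - 2 * Re (cnj b * a) + (cmod b)^2"
  unfolding cmod_power2 by (simp add: power2_eq_square algebra_simps)

lemma entry_bound:
  assumes "bounded_kernel t"
  shows "\<exists>C. \<forall>x y. cmod (t x y) \<le> C"
proof -
  obtain C where C: "\<And>F a b. finite F \<Longrightarrow>
     cmod (\<Sum>x\<in>F. \<Sum>y\<in>F. cnj (b x) * t x y * a y)
       \<le> C * sqrt (\<Sum>y\<in>F. (cmod (a y))\<^sup>2) * sqrt (\<Sum>x\<in>F. (cmod (b x))\<^sup>2)"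
    using assms unfolding bounded_kernel_def by blast
  have "cmod (t x y) \<le> C" for x y
  proof (cases "x = y")
    case True thus ?thesis using C[where F="{x}" and a="\<lambda>z. if z = y then 1 else 0" and b="\<lambda>z. if z = x then 1 else 0"] by simp
  next
    case False
    have "(\<Sum>x'\<in>{x,y}. \<Sum>y'\<in>{x,y}. cnj (if x' = x then 1 else 0) * t x' y' * (if y' = y then 1 else 0)) = t x y"
      using False by (simp add: sum.insert)
    moreover have "(\<Sum>y'\<in>{x,y}. (cmod (if y' = y then 1 else 0::complex))\<^sup>2) = 1" using False by simp
    moreover have "(\<Sum>y'\<in>{x,y}. (cmod (if y' = x then 1 else 0::complex))\<^sup>2) = 1" using False by simp
    ultimately show ?thesis using C[where F="{x,y}" and a="\<lambda>z. if z = y then 1 else 0" and b="\<lambda>z. if z = x then 1 else 0"] by simp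
  qed
  thus ?thesis by blast
qed

lemma summ_aux:
  fixes f :: "'a \<Rightarrow> complex"
  assumes "(\<mu> has_sum 1) UNIV" "\<And>g. \<mu> g \<ge> 0" "\<And>s. cmod (f s) \<le> B"
  shows "(\<lambda>s. complex_of_real (\<mu> s) * f s) summable_on UNIV"
proof -
  have "(\<lambda>s. \<mu> s * B) summable_on UNIV"
    using has_sum_cmult_left[OF assms(1)] summable_on_def by blast
  moreover have "norm (complex_of_real (\<mu> s) * f s) \<le> \<mu> s * B" for s
    using assms(2,3)[of s] by (simp add: norm_mult mult_left_mono)
  ultimately have "(\<lambda>s. norm (complex_of_real (\<mu> s) * f s)) summable_on UNIV"
    by (intro Infinite_Sum.abs_summable_on_comparison_test'[where g="\<lambda>s. \<mu> s * B"]) auto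
  thus ?thesis by (rule Infinite_Sum.abs_summable_summable)
qed

lemma single_le:
  fixes f :: "'a \<Rightarrow> real"
  assumes "(f has_sum S) UNIV" "\<And>x. f x \<ge> 0"
  shows "f a \<le> S"
proof -
  have "(f has_sum f a) {a}" using has_sum_finite[of "{a}" f] by simp
  from has_sum_mono_neutral[OF this assms(1)] assms(2) show ?thesis by auto
qed

lemma key:
  fixes \<mu> :: "'g::group_add \<Rightarrow> real" and h :: "'g \<Rightarrow> complex"
  assumes hs: "(\<mu> has_sum 1) UNIV" and nn: "\<And>g. \<mu> g \<ge> 0"
    and eq: "\<And>g. ((\<lambda>s. complex_of_real (\<mu> s) * h (g + s)) has_sum lam * h g) UNIV"
    and lam: "cmod lam = 1" and M2: "\<And>g. (cmod (h g))^2 \<le> M2"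
  shows "\<mu> s0 * (cmod (h (g + s0) - lam * h g))^2 \<le> M2 - (cmod (h g))^2"
    and "\<mu> s0 * (M2 - (cmod (h (g + s0)))^2) \<le> M2 - (cmod (h g))^2"
proof -
  define c where "c = cnj (lam * h g)"
  define \<phi> where "\<phi> x = (cmod (h x))^2" for x
  have cz: "Re (c * (lam * h g)) = \<phi> g"
  proof -
    have "c * (lam * h g) = complex_of_real ((cmod (lam * h g))^2)"
      unfolding c_def by (metis complex_norm_square mult.commute)
    thus ?thesis using lam by (simp add: \<phi>_def norm_mult)
  qed
  have A: "((\<lambda>s. Re (c * (complex_of_real (\<mu> s) * h (g + s)))) has_sum \<phi> g) UNIV"
    using has_sum_Re[OF has_sum_cmult_right[OF eq[of g], of c]] cz by simp
  have B: "((\<lambda>s. \<mu> s * (M2 + \<phi> g)) has_sum (M2 + \<phi> g)) UNIV"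
    using has_sum_cmult_left[OF hs, of "M2 + \<phi> g"] by simp
  have C: "((\<lambda>s. \<mu> s * (M2 + \<phi> g) + (-2) * Re (c * (complex_of_real (\<mu> s) * h (g + s))))
      has_sum (M2 - \<phi> g)) UNIV"
    using has_sum_add[OF B has_sum_cmult_right[OF A, of "-2"]] by simp
  define E where "E s = (cmod (h (g + s) - lam * h g))^2" for s
  have pt: "\<mu> s * (M2 + \<phi> g) + (-2) * Re (c * (complex_of_real (\<mu> s) * h (g + s)))
      = \<mu> s * (E s + (M2 - \<phi> (g + s)))" for s
  proof -
    have e1: "E s = \<phi> (g + s) - 2 * Re (c * h (g + s)) + \<phi> g"
      unfolding E_def cmod_diff_sq \<phi>_def c_def using lam by (simp add: norm_mult)
    have e2: "Re (c * (complex_of_real (\<mu> s) * h (g + s))) = \<mu> s * Re (c * h (g + s))"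
      by (simp add: algebra_simps)
    show ?thesis unfolding e1 e2 by (simp add: algebra_simps)
  qed
  have D: "((\<lambda>s. \<mu> s * (E s + (M2 - \<phi> (g + s)))) has_sum (M2 - \<phi> g)) UNIV"
    using C pt by simp
  have nn2: "\<mu> s * (E s + (M2 - \<phi> (g + s))) \<ge> 0" for s
    using nn[of s] M2[of "g+s"] by (simp add: E_def \<phi>_def)
  have le: "\<mu> s0 * (E s0 + (M2 - \<phi> (g + s0))) \<le> M2 - \<phi> g"
    by (rule single_le[OF D nn2])
  have "\<mu> s0 * E s0 \<le> \<mu> s0 * (E s0 + (M2 - \<phi> (g + s0)))"
    using nn[of s0] M2[of "g+s0"] by (intro mult_left_mono) (auto simp: \<phi>_def)
  thus "\<mu> s0 * (cmod (h (g + s0) - lam * h g))^2 \<le> M2 - (cmod (h g))^2"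
    using le by (simp add: E_def \<phi>_def)
  have "\<mu> s0 * (M2 - \<phi> (g + s0)) \<le> \<mu> s0 * (E s0 + (M2 - \<phi> (g + s0)))"
    using nn[of s0] by (intro mult_left_mono) (auto simp: E_def)
  thus "\<mu> s0 * (M2 - (cmod (h (g + s0)))^2) \<le> M2 - (cmod (h g))^2"
    using le by (simp add: \<phi>_def)
qed

lemma chain:
  fixes \<mu> D :: "'g::group_add \<Rightarrow> real" and h :: "'g \<Rightarrow> complex"
  assumes k1: "\<And>g s. \<mu> s * (cmod (h (g + s) - lam * h g))^2 \<le> D g"
    and k2: "\<And>g s. \<mu> s * D (g + s) \<le> D g"
    and Dnn: "\<And>g. D g \<ge> 0" and lam: "cmod lam = 1"
    and a: "a \<in> sgrp_gen {g. \<mu> g > 0}"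
  shows "\<exists>n>0. \<exists>K\<ge>0. \<forall>g. D (g + a) \<le> K * D g \<and> cmod (h (g + a) - lam ^ n * h g) \<le> K * sqrt (D g)"
  using a
proof induction
  case (base s)
  define p where "p = \<mu> s"
  have p: "p > 0" using base p_def by simp
  define K where "K = 1 / p + 1 / sqrt p"
  have K0: "K \<ge> 0" using p by (simp add: K_def)
  have "D (g + s) \<le> K * D g \<and> cmod (h (g + s) - lam ^ 1 * h g) \<le> K * sqrt (D g)" for g
  proof
    have "D (g + s) \<le> D g / p" using k2[of s g] p by (simp add: p_def field_simps)
    also have "\<dots> \<le> K * D g" using p Dnn[of g] by (simp add: K_def field_simps)
    finally show "D (g + s) \<le> K * D g" .
    have "(cmod (h (g + s) - lam * h g))^2 \<le> D g / p" using k1[of s g] p by (simp add: p_def field_simps)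
    hence "cmod (h (g + s) - lam * h g) \<le> sqrt (D g / p)" by (rule real_le_rsqrt)
    also have "\<dots> = sqrt (D g) * (1 / sqrt p)" by (simp add: real_sqrt_divide)
    also have "\<dots> \<le> sqrt (D g) * K" using p Dnn[of g] by (intro mult_left_mono) (auto simp: K_def)
    finally show "cmod (h (g + s) - lam ^ 1 * h g) \<le> K * sqrt (D g)" by (simp add: mult.commute)
  qed
  thus ?case using K0 by (intro exI[of _ 1]) auto
next
  case (add a b)
  from add.IH(1) obtain n1 K1 where n1: "n1 > 0" "K1 \<ge> 0"
    and H1: "\<And>g. D (g + a) \<le> K1 * D g \<and> cmod (h (g + a) - lam ^ n1 * h g) \<le> K1 * sqrt (D g)" by blast
  from add.IH(2) obtain n2 K2 where n2: "n2 > 0" "K2 \<ge> 0"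
    and H2: "\<And>g. D (g + b) \<le> K2 * D g \<and> cmod (h (g + b) - lam ^ n2 * h g) \<le> K2 * sqrt (D g)" by blast
  define K where "K = K1 * K2 + K2 * sqrt K1 + K1"
  have K0: "K \<ge> 0" using n1 n2 by (simp add: K_def)
  have "D (g + (a + b)) \<le> K * D g \<and> cmod (h (g + (a + b)) - lam ^ (n2 + n1) * h g) \<le> K * sqrt (D g)" for g
  proof
    have e: "g + (a + b) = (g + a) + b" by (simp add: add.assoc)
    have "D (g + (a + b)) \<le> K2 * D (g + a)" using H2[of "g + a"] e by simp
    also have "\<dots> \<le> K2 * (K1 * D g)" using H1[of g] n2 by (intro mult_left_mono) auto
    also have "\<dots> \<le> K * D g" using n1 n2 Dnn[of g] by (simp add: K_def algebra_simps)
    finally show "D (g + (a + b)) \<le> K * D g" .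
    have sq: "sqrt (D (g + a)) \<le> sqrt K1 * sqrt (D g)"
      using H1[of g] by (simp add: real_sqrt_mult[symmetric])
    have "cmod (h (g + (a + b)) - lam ^ (n2 + n1) * h g)
        \<le> cmod (h ((g + a) + b) - lam ^ n2 * h (g + a)) + cmod (lam ^ n2 * (h (g + a) - lam ^ n1 * h g))"
    proof -
      have "h (g + (a + b)) - lam ^ (n2 + n1) * h g = (h ((g + a) + b) - lam ^ n2 * h (g + a)) + lam ^ n2 * (h (g + a) - lam ^ n1 * h g)"
        by (simp add: power_add algebra_simps)
      thus ?thesis by (metis norm_triangle_ineq)
    qed
    also have "\<dots> = cmod (h ((g + a) + b) - lam ^ n2 * h (g + a)) + cmod (h (g + a) - lam ^ n1 * h g)"
      using lam by (simp add: norm_mult norm_power)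
    also have "\<dots> \<le> K2 * sqrt (D (g + a)) + K1 * sqrt (D g)"
      using H1[of g] H2[of "g + a"] by (intro add_mono) auto
    also have "\<dots> \<le> K2 * (sqrt K1 * sqrt (D g)) + K1 * sqrt (D g)"
      using sq n1 n2 by (intro add_mono mult_left_mono) auto
    also have "\<dots> \<le> K * sqrt (D g)"
      using n1 n2 Dnn[of g] by (simp add: K_def algebra_simps)
    finally show "cmod (h (g + (a + b)) - lam ^ (n2 + n1) * h g) \<le> K * sqrt (D g)" .
  qed
  thus ?case using K0 n1 by (intro exI[of _ "n2 + n1"]) auto
qed

theorem corollary2p4:
  fixes \<mu> :: "'g::{group_add, countable} \<Rightarrow> real"
    and t :: "'g \<Rightarrow> 'g \<Rightarrow> complex"
    and lam :: complex
  assumes "is_prob \<mu>"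
    and "sgrp_gen {g. \<mu> g > 0} = UNIV"
    and "cmod lam = 1"
    and "bounded_kernel t"
    and "t \<noteq> (\<lambda>_ _. 0)"
    and "markov_op \<mu> t = (\<lambda>x y. lam * t x y)"
  shows "\<exists>k::nat. k > 0 \<and> lam ^ k = 1"
proof -
  have nn: "\<And>g. \<mu> g \<ge> 0" and hs: "(\<mu> has_sum 1) UNIV" using assms(1) by (auto simp: is_prob_def)
  obtain x0 y0 where t0: "t x0 y0 \<noteq> 0" using assms(5) by blast
  define h where "h g = t (x0 + g) (y0 + g)" for g
  obtain C where C: "\<And>x y. cmod (t x y) \<le> C" using entry_bound[OF assms(4)] by blast
  have hC: "cmod (h g) \<le> C" for g unfolding h_def by (rule C)
  have eq: "((\<lambda>s. complex_of_real (\<mu> s) * h (g + s)) has_sum lam * h g) UNIV" for g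
  proof -
    have "markov_op \<mu> t (x0 + g) (y0 + g) = lam * h g" using assms(6) by (simp add: h_def)
    hence "infsum (\<lambda>s. complex_of_real (\<mu> s) * h (g + s)) UNIV = lam * h g"
      by (simp add: markov_op_def rho_conj_def h_def add.assoc)
    moreover have "(\<lambda>s. complex_of_real (\<mu> s) * h (g + s)) summable_on UNIV"
      using summ_aux[OF hs nn, of "\<lambda>s. h (g + s)" C] hC by blast
    ultimately show ?thesis using has_sum_infsum by metis
  qed
  define \<phi> where "\<phi> g = (cmod (h g))^2" for g
  define M2 where "M2 = (SUP g. \<phi> g)"
  have bdd: "bdd_above (range \<phi>)"
  proof (rule bdd_aboveI2)
    fix g show "\<phi> g \<le> C^2" unfolding \<phi>_def using hC[of g] by (simp add: power_mono)
  qed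
  have M2: "\<phi> g \<le> M2" for g unfolding M2_def using bdd by (simp add: cSUP_upper)
  define D where "D g = M2 - \<phi> g" for g
  have Dnn: "D g \<ge> 0" for g using M2[of g] by (simp add: D_def)
  have k1: "\<mu> s * (cmod (h (g + s) - lam * h g))^2 \<le> D g" for g s
    using key(1)[OF hs nn eq assms(3), of M2 s g] M2 by (simp add: D_def \<phi>_def)
  have k2: "\<mu> s * D (g + s) \<le> D g" for g s
    using key(2)[OF hs nn eq assms(3), of M2 s g] M2 by (simp add: D_def \<phi>_def)
  obtain n K where n: "n > 0" "K \<ge> 0"
    and H: "\<And>g. cmod (h g - lam ^ n * h g) \<le> K * sqrt (D g)"
    using chain[OF k1 k2 Dnn assms(3), of 0] assms(2) by auto
  show ?thesis
  proof (rule ccontr)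
    assume "\<not> ?thesis"
    hence ne: "lam ^ n \<noteq> 1" using n by blast
    define c where "c = cmod (1 - lam ^ n)"
    have c: "c > 0" using ne by (simp add: c_def)
    have ph0: "\<phi> 0 > 0" using t0 by (simp add: \<phi>_def h_def)
    hence M2p: "M2 > 0" using M2[of 0] by simp
    define \<epsilon> where "\<epsilon> = min (M2 / 2) (M2 * c^2 / (2 * (K^2 + 1)))"
    have "M2 * c^2 / (2 * (K^2 + 1)) > 0" using M2p c by (intro divide_pos_pos mult_pos_pos) (auto simp: add_nonneg_pos)
    hence \<epsilon>: "\<epsilon> > 0" using M2p by (simp add: \<epsilon>_def)
    have "M2 - \<epsilon> < M2" using \<epsilon> by simp
    then obtain g where g: "M2 - \<epsilon> < \<phi> g" unfolding M2_def using less_cSUP_iff[OF _ bdd] by blast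
    have Dg: "D g < \<epsilon>" using g by (simp add: D_def)
    have "(cmod (h g) * c)^2 \<le> (K * sqrt (D g))^2"
    proof -
      have "cmod (h g - lam ^ n * h g) = cmod (h g) * c"
        by (simp add: c_def norm_mult algebra_simps flip: norm_mult)
      hence "cmod (h g) * c \<le> K * sqrt (D g)" using H[of g] by simp
      thus ?thesis using c by (intro power_mono) auto
    qed
    also have "\<dots> = K^2 * D g" using Dnn[of g] by (simp add: power_mult_distrib)
    also have "\<dots> \<le> K^2 * \<epsilon>" using Dg by (intro mult_left_mono) auto
    also have "\<dots> \<le> K^2 * (M2 * c^2 / (2 * (K^2 + 1)))" by (intro mult_left_mono) (auto simp: \<epsilon>_def)
    also have "\<dots> \<le> M2 * c^2 / 2"
    proof -
      have "K^2 / (K^2 + 1) \<le> 1" by (simp add: add_nonneg_pos)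
      hence "K^2 / (K^2 + 1) * (M2 * c^2 / 2) \<le> 1 * (M2 * c^2 / 2)"
        using M2p by (intro mult_right_mono) auto
      thus ?thesis by (simp add: field_simps)
    qed
    also have "\<dots> < \<phi> g * c^2"
    proof -
      have "M2 / 2 < \<phi> g" using g by (simp add: \<epsilon>_def)
      thus ?thesis using c by (simp add: field_simps)
    qed
    also have "\<dots> = (cmod (h g) * c)^2" by (simp add: \<phi>_def power_mult_distrib)
    finally show False by simp
  qed
qed

end
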